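(* Let $r\ge 1$ and $m\ge r$ be integers, and put $d_k(m,r)=\det\left(\binom{k+i+j}{m}\right)_{i,j=0}^{r-1}$ for $k\ge 0$. Then, as formal power series in $x$, $$(1-x)^{r(m-r+1)+1}\sum_{k\ge 0} d_k(m,r)\,x^k=(-1)^{\binom r2}\,x^{m-r+1}A_{m,r}(x),$$ where $A_{m,r}(x)=\sum_{j} N(r,m-r+1,j)\,x^j$ is a polynomial in $x$ of degree at most $(r-1)(m-r)$.
   Context: For an integer $x$ and integer $r>0$ the rising factorial is $x^{(r)}=x(x+1)\cdots(x+r-1)$, with $x^{(0)}=1$. For a positive integer $r$ and integers $n,k$ the $r$-Hoggatt binomial is defined by $\left\langle \begin{smallmatrix} n\\ k\end{smallmatrix}\right\rangle_r=\prod_{j=1}^{k}\frac{(n-k+j)^{(r)}}{(j)^{(r)}}$ for $0\le k\le n$ (empty product $=1$), and $0$ otherwise. For integers $r\ge1$, $s\ge 1$, the $r$-dimensional Narayana numbers $N(r,s,j)$ ($j\ge 0$) are the coefficients in $$(1-x)^{rs+1}\sum_{k\ge0}\left\langle \begin{matrix} k+s\\ s\end{matrix}\right\rangle_r x^k=\sum_{j\ge 0}N(r,s,j)\,x^j ,$$ and the left-hand side is a polynomial in $x$ of degree at most $(r-1)(s-1)$. *)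

theory Defs
  imports "Jordan_Normal_Form.Determinant" "HOL-Computational_Algebra.Formal_Power_Series"
begin

definition hoggatt :: "nat \<Rightarrow> int \<Rightarrow> int \<Rightarrow> rat" where
  "hoggatt r n k = (if 0 \<le> k \<and> k \<le> n
      then (\<Prod>j\<in>{1..k}. pochhammer (of_int (n - k + j)) r / pochhammer (of_int j) r)
      else 0)"

definition narayana_series :: "nat \<Rightarrow> nat \<Rightarrow> rat fps" where
  "narayana_series r s =
     (1 - fps_X) ^ (r * s + 1) * Abs_fps (\<lambda>k. hoggatt r (int k + int s) (int s))"

definition narayana :: "nat \<Rightarrow> nat \<Rightarrow> nat \<Rightarrow> rat" where
  "narayana r s j = fps_nth (narayana_series r s) j"

definition dk :: "nat \<Rightarrow> nat \<Rightarrow> nat \<Rightarrow> rat" where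
  "dk k m r = det (mat r r (\<lambda>(i, j). of_nat ((k + i + j) choose m)))"

end

theory Submission imports Defs begin

lemma det_rows_scale:
  fixes A :: "'a::comm_ring_1 mat"
  assumes A: "A \<in> carrier_mat n n"
  shows "det (mat n n (\<lambda>(i,j). c i * A $$ (i,j))) = prod c {0..<n} * det A"
proof -
  have "det (mat n n (\<lambda>(i,j). c i * A $$ (i,j))) =
     (\<Sum> p \<in> {p. p permutes {0 ..< n}}. signof p * (\<Prod> i = 0 ..< n. c i * A $$ (i, p i)))"
    by (subst det_def'[of _ n]) (auto intro!: sum.cong prod.cong dest: permutes_in_image)
  also have "\<dots> = (\<Sum> p \<in> {p. p permutes {0 ..< n}}. prod c {0..<n} * (signof p * (\<Prod> i = 0 ..< n. A $$ (i, p i))))"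
    by (auto intro!: sum.cong simp: prod.distrib)
  also have "\<dots> = prod c {0..<n} * det A"
    by (simp add: det_def'[OF A] sum_distrib_left)
  finally show ?thesis .
qed

lemma det_cols_scale:
  fixes A :: "'a::comm_ring_1 mat"
  assumes A: "A \<in> carrier_mat n n"
  shows "det (mat n n (\<lambda>(i,j). A $$ (i,j) * c j)) = prod c {0..<n} * det A"
proof -
  have "det (mat n n (\<lambda>(i,j). A $$ (i,j) * c j)) = det (transpose_mat (mat n n (\<lambda>(i,j). A $$ (i,j) * c j)))"
    by (rule det_transpose[symmetric]) auto
  also have "transpose_mat (mat n n (\<lambda>(i,j). A $$ (i,j) * c j)) = mat n n (\<lambda>(i,j). c i * transpose_mat A $$ (i,j))"
    using A by (auto intro!: eq_matI)
  also have "det \<dots> = prod c {0..<n} * det (transpose_mat A)"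
    by (rule det_rows_scale) (use A in auto)
  also have "det (transpose_mat A) = det A" by (rule det_transpose[OF A])
  finally show ?thesis .
qed


definition Lm :: "nat \<Rightarrow> rat mat" where
  "Lm r = mat r r (\<lambda>(i,a). of_nat (i choose a))"

definition Bm :: "nat \<Rightarrow> nat \<Rightarrow> nat \<Rightarrow> rat mat" where
  "Bm k m r = mat r r (\<lambda>(a,j). of_nat ((k+j) choose (m-a)))"

definition Wm :: "nat \<Rightarrow> nat \<Rightarrow> rat mat" where
  "Wm t r = mat r r (\<lambda>(a,l). if a + l < r then of_nat (t choose (r-1-a-l)) else 0)"

lemma det_Lm: "det (Lm r) = 1"
proof -
  have "det (Lm r) = prod_list (diag_mat (Lm r))"
    by (rule det_lower_triangular[of r]) (auto simp: Lm_def)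
  also have "\<dots> = 1" by (simp add: prod_list_diag_prod Lm_def)
  finally show ?thesis .
qed

lemma det_LmT: "det (transpose_mat (Lm r)) = 1"
  by (simp add: det_transpose[of _ r] Lm_def det_Lm[unfolded Lm_def])

lemma vdm_cut:
  assumes "i < r" "r \<le> m"
  shows "(\<Sum>a\<in>{0..<r}. (i choose a) * (n choose (m - a))) = (i + n) choose m"
proof -
  have "(\<Sum>a\<in>{0..<r}. (i choose a) * (n choose (m - a))) = (\<Sum>a\<le>m. (i choose a) * (n choose (m - a)))"
    by (rule sum.mono_neutral_left) (use assms in auto)
  also have "\<dots> = (i + n) choose m" by (rule vandermonde)
  finally show ?thesis .
qed

lemma hankel_fact:
  assumes "r \<le> m"
  shows "mat r r (\<lambda>(i, j). of_nat ((k + i + j) choose m)) = Lm r * Bm k m r"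
proof (rule eq_matI)
  fix i j assume ij: "i < dim_row (Lm r * Bm k m r)" "j < dim_col (Lm r * Bm k m r)"
  hence i: "i < r" and j: "j < r" by (auto simp: Lm_def Bm_def)
  have "(Lm r * Bm k m r) $$ (i,j) = (\<Sum>a\<in>{0..<r}. of_nat (i choose a) * of_nat ((k+j) choose (m-a)))"
    using i j by (simp add: Lm_def Bm_def scalar_prod_def)
  also have "\<dots> = of_nat (\<Sum>a\<in>{0..<r}. (i choose a) * ((k+j) choose (m-a)))" by simp
  also have "\<dots> = of_nat ((k + i + j) choose m)"
    using vdm_cut[OF i assms, of "k+j"] by (simp add: ac_simps)
  finally show "mat r r (\<lambda>(i, j). of_nat ((k + i + j) choose m)) $$ (i, j) = (Lm r * Bm k m r) $$ (i,j)"
    using i j by simp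
qed (auto simp: Lm_def Bm_def)

lemma choose_split: "(n choose (s + q)) * ((s + q) choose s) = (n choose s) * ((n - s) choose q)"
proof (cases "s + q \<le> n")
  case True thus ?thesis using choose_mult[of s "s+q" n] by simp
next
  case False
  hence "n choose (s + q) = 0" by (simp add: binomial_eq_0)
  moreover have "(n choose s) * ((n - s) choose q) = 0"
  proof (cases "s \<le> n")
    case True thus ?thesis using False by (simp add: binomial_eq_0)
  next
    case False thus ?thesis by (simp add: binomial_eq_0)
  qed
  ultimately show ?thesis by (metis mult_zero_left)
qed

lemma W_step: "det (Wm t (Suc r)) = (-1)^r * det (Wm t r)"
proof -
  have C: "Wm t (Suc r) \<in> carrier_mat (Suc r) (Suc r)" by (simp add: Wm_def)
  have "det (Wm t (Suc r)) = (\<Sum>j<Suc r. Wm t (Suc r) $$ (r,j) * cofactor (Wm t (Suc r)) r j)"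
    by (rule laplace_expansion_row[OF C]) simp
  also have "\<dots> = (\<Sum>j<Suc r. if j = 0 then cofactor (Wm t (Suc r)) r j else 0)"
    by (rule sum.cong) (auto simp: Wm_def)
  also have "\<dots> = cofactor (Wm t (Suc r)) r 0" by simp
  also have "mat_delete (Wm t (Suc r)) r 0 = Wm t r"
    by (rule eq_matI) (auto simp: mat_delete_def Wm_def)
  hence "cofactor (Wm t (Suc r)) r 0 = (-1)^r * det (Wm t r)"
    by (simp add: cofactor_def)
  finally show ?thesis .
qed

lemma det_Wm: "det (Wm t r) = (-1)^(r choose 2)"
proof (induction r)
  case 0 thus ?case by (simp add: Wm_def binomial_eq_0)
next
  case (Suc r)
  have "Suc r choose 2 = (r choose 2) + r"
    using binomial_Suc_Suc[of r 1] by (simp add: numeral_2_eq_2)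
  thus ?case using Suc W_step by (simp add: power_add)
qed

lemma Q_fact:
  "mat r r (\<lambda>(a,j). of_nat ((t + j) choose (r - 1 - a))) = Wm t r * transpose_mat (Lm r)"
proof (rule eq_matI)
  fix a j assume "a < dim_row (Wm t r * transpose_mat (Lm r))" "j < dim_col (Wm t r * transpose_mat (Lm r))"
  hence a: "a < r" and j: "j < r" by (auto simp: Lm_def Wm_def)
  have "(Wm t r * transpose_mat (Lm r)) $$ (a,j) =
       (\<Sum>l\<in>{0..<r}. (if a + l < r then of_nat (t choose (r-1-a-l)) else 0) * of_nat (j choose l))"
    using a j by (simp add: Lm_def Wm_def scalar_prod_def)
  also have "\<dots> = (\<Sum>l\<le>r-1-a. of_nat (j choose l) * of_nat (t choose (r-1-a-l)))"
    by (rule sum.mono_neutral_cong_right) (use a in auto)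
  also have "\<dots> = of_nat (\<Sum>l\<le>r-1-a. (j choose l) * (t choose (r-1-a-l)))" by simp
  also have "\<dots> = of_nat ((j + t) choose (r-1-a))" by (subst vandermonde) simp
  finally show "mat r r (\<lambda>(a,j). of_nat ((t + j) choose (r - 1 - a))) $$ (a,j) = (Wm t r * transpose_mat (Lm r)) $$ (a,j)"
    using a j by (simp add: ac_simps)
qed (auto simp: Lm_def Wm_def)


lemma dk_closed:
  assumes r1: "r \<ge> 1" and rm: "m \<ge> r" and sdef: "s = m - r + 1"
  shows "dk k m r = (if s \<le> k then (-1)^(r choose 2) * ((\<Prod>j<r. of_nat ((k+j) choose s)) / (\<Prod>a<r. of_nat ((s+a) choose s))) else 0)"
proof -
  define Q where "Q = mat r r (\<lambda>(a,j). (of_nat ((k + j - s) choose (r - 1 - a)) :: rat))"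
  define c where "c = (\<lambda>j. (of_nat ((k + j) choose s) :: rat))"
  define d where "d = (\<lambda>a. 1 / (of_nat ((m - a) choose s) :: rat))"
  have QC: "Q \<in> carrier_mat r r" by (simp add: Q_def)
  have "dk k m r = det (Lm r * Bm k m r)"
    unfolding dk_def by (subst hankel_fact[OF rm]) simp
  also have "\<dots> = det (Bm k m r)"
    by (subst det_mult[of _ r]) (auto simp: Lm_def Bm_def det_Lm[unfolded Lm_def])
  also have "Bm k m r = mat r r (\<lambda>(a,j). d a * (mat r r (\<lambda>(a,j). Q $$ (a,j) * c j)) $$ (a,j))"
  proof (rule eq_matI)
    fix a j assume "a < dim_row (mat r r (\<lambda>(a,j). d a * (mat r r (\<lambda>(a,j). Q $$ (a,j) * c j)) $$ (a,j)))"
       "j < dim_col (mat r r (\<lambda>(a,j). d a * (mat r r (\<lambda>(a,j). Q $$ (a,j) * c j)) $$ (a,j)))"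
    hence a: "a < r" and j: "j < r" by auto
    have ma: "m - a = s + (r - 1 - a)" using a rm sdef by auto
    have nz: "((m - a) choose s) \<noteq> 0" using ma by simp
    have e: "((k+j) choose (m-a)) * ((m-a) choose s) = ((k+j) choose s) * ((k+j-s) choose (r-1-a))"
      using choose_split[of "k+j" s "r-1-a"] ma by simp
    have "(of_nat ((k+j) choose (m-a)) :: rat) = of_nat (((k+j) choose s) * ((k+j-s) choose (r-1-a))) / of_nat ((m-a) choose s)"
    proof -
      have e': "(of_nat ((k+j) choose (m-a)) :: rat) * of_nat ((m-a) choose s) = of_nat (((k+j) choose s) * ((k+j-s) choose (r-1-a)))"
        using e by (metis of_nat_mult)
      show ?thesis using e' nz by (simp add: eq_divide_eq)
    qed
    thus "Bm k m r $$ (a,j) = mat r r (\<lambda>(a,j). d a * (mat r r (\<lambda>(a,j). Q $$ (a,j) * c j)) $$ (a,j)) $$ (a,j)"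
      using a j by (simp add: Bm_def Q_def c_def d_def)
  qed (auto simp: Bm_def)
  also have "det \<dots> = prod d {0..<r} * (prod c {0..<r} * det Q)"
    by (subst det_rows_scale[of _ r]) (auto simp: det_cols_scale[OF QC])
  finally have D: "dk k m r = prod d {0..<r} * (prod c {0..<r} * det Q)" .
  show ?thesis
  proof (cases "s \<le> k")
    case False
    have "prod c {0..<r} = 0"
      by (rule prod_zero) (use False r1 in \<open>auto simp: c_def intro!: bexI[of _ 0] binomial_eq_0\<close>)
    thus ?thesis using D False by simp
  next
    case True
    have "Q = mat r r (\<lambda>(a,j). of_nat (((k - s) + j) choose (r - 1 - a)))"
      unfolding Q_def using True by (auto intro!: eq_matI)
    also have "\<dots> = Wm (k-s) r * transpose_mat (Lm r)" by (rule Q_fact)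
    finally have "det Q = (-1)^(r choose 2)"
      by (simp add: det_mult[of _ r] Wm_def Lm_def det_Wm[unfolded Wm_def] det_LmT[unfolded Lm_def])
    moreover have "prod d {0..<r} = 1 / (\<Prod>a<r. of_nat ((s+a) choose s))"
    proof -
      have "prod d {0..<r} = 1 / (\<Prod>a<r. of_nat ((m - a) choose s))"
        by (simp add: d_def prod_dividef atLeast0LessThan)
      also have "(\<Prod>a<r. (of_nat ((m - a) choose s)::rat)) = (\<Prod>a<r. of_nat ((s + (r - Suc a)) choose s))"
      proof (rule prod.cong[OF refl])
        fix a assume "a \<in> {..<r}"
        hence "m - a = s + (r - Suc a)" using rm sdef by auto
        thus "(of_nat ((m - a) choose s)::rat) = of_nat ((s + (r - Suc a)) choose s)" by (simp only:)
      qed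
      also have "\<dots> = (\<Prod>a<r. of_nat ((s+a) choose s))"
        by (rule prod.nat_diff_reindex)
      finally show ?thesis .
    qed
    ultimately show ?thesis using D True by (simp add: c_def atLeast0LessThan)
  qed
qed

lemma choose_poch: "(of_nat ((x + s) choose s) :: rat) = pochhammer (of_nat x + 1) s / fact s"
  by (simp add: binomial_gbinomial gbinomial_pochhammer')

lemma poch_swap:
  "(\<Prod>j<r. pochhammer (y + of_nat j + 1) s) = (\<Prod>j\<in>{1..s}. pochhammer (y + of_nat j) r :: rat)"
proof -
  have "(\<Prod>j<r. pochhammer (y + of_nat j + 1) s) = (\<Prod>j<r. \<Prod>i<s. y + of_nat j + 1 + of_nat i)"
    by (simp add: pochhammer_prod atLeast0LessThan)
  also have "\<dots> = (\<Prod>i<s. \<Prod>j<r. y + of_nat j + 1 + of_nat i)" by (rule prod.swap)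
  also have "\<dots> = (\<Prod>i<s. pochhammer (y + of_nat (Suc i)) r)"
    by (simp add: pochhammer_prod atLeast0LessThan algebra_simps)
  also have "\<dots> = (\<Prod>j\<in>{1..s}. pochhammer (y + of_nat j) r)"
    by (simp add: prod.atLeast1_atMost_eq del: of_nat_Suc)
  finally show ?thesis .
qed

lemma hoggatt_nat:
  assumes "s \<le> k"
  shows "hoggatt r (int k) (int s) = (\<Prod>j\<in>{1..s}. pochhammer (of_nat (k - s) + of_nat j) r) / (\<Prod>j\<in>{1..s}. pochhammer (of_nat j) r)"
proof -
  have "hoggatt r (int k) (int s) = (\<Prod>j\<in>{1..int s}. pochhammer (of_int (int k - int s + j)) r / pochhammer (of_int j) r)"
    using assms by (simp add: hoggatt_def)
  also have "\<dots> = (\<Prod>j\<in>int ` {1..s}. pochhammer (of_int (int k - int s + j)) r / pochhammer (of_int j) r)"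
    by (simp add: image_int_atLeastAtMost)
  also have "\<dots> = (\<Prod>j\<in>{1..s}. pochhammer (of_int (int k - int s + int j)) r / pochhammer (of_int (int j)) r)"
    by (subst prod.reindex) auto
  also have "\<dots> = (\<Prod>j\<in>{1..s}. pochhammer (of_nat (k - s) + of_nat j) r / pochhammer (of_nat j) r)"
    using assms by (intro prod.cong) (auto simp: of_nat_diff)
  finally show ?thesis by (simp add: prod_dividef)
qed

lemma hog_closed:
  assumes "s \<le> k"
  shows "hoggatt r (int k) (int s) = (\<Prod>j<r. of_nat ((k+j) choose s)) / (\<Prod>a<r. of_nat ((s+a) choose s))"
proof -
  have "(\<Prod>j<r. (of_nat ((k+j) choose s) :: rat)) = (\<Prod>j<r. pochhammer (of_nat (k-s) + of_nat j + 1) s / fact s)"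
  proof (rule prod.cong[OF refl])
    fix j assume "j \<in> {..<r}"
    have "k + j = (k - s + j) + s" using assms by simp
    hence "(of_nat ((k+j) choose s) :: rat) = of_nat (((k - s + j) + s) choose s)" by (simp only:)
    also have "\<dots> = pochhammer (of_nat (k-s) + of_nat j + 1) s / fact s" by (simp add: choose_poch)
    finally show "(of_nat ((k+j) choose s) :: rat) = pochhammer (of_nat (k-s) + of_nat j + 1) s / fact s" .
  qed
  also have "\<dots> = (\<Prod>j\<in>{1..s}. pochhammer (of_nat (k - s) + of_nat j) r) / fact s ^ r"
    by (simp add: prod_dividef poch_swap)
  finally have N: "(\<Prod>j<r. (of_nat ((k+j) choose s) :: rat)) = (\<Prod>j\<in>{1..s}. pochhammer (of_nat (k - s) + of_nat j) r) / fact s ^ r" .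
  have "(\<Prod>a<r. (of_nat ((s+a) choose s) :: rat)) = (\<Prod>j<r. pochhammer (0 + of_nat j + 1) s / fact s)"
    by (intro prod.cong) (auto simp: choose_poch add.commute)
  also have "\<dots> = (\<Prod>j\<in>{1..s}. pochhammer (0 + of_nat j) r) / fact s ^ r"
    by (simp only: prod_dividef poch_swap prod_constant card_lessThan)
  finally have D: "(\<Prod>a<r. (of_nat ((s+a) choose s) :: rat)) = (\<Prod>j\<in>{1..s}. pochhammer (of_nat j) r) / fact s ^ r" by simp
  show ?thesis unfolding N D hoggatt_nat[OF assms] by simp
qed

definition GP :: "rat poly \<Rightarrow> rat fps" where
  "GP P = Abs_fps (\<lambda>k. poly P (of_nat k))"

definition DQ :: "rat poly \<Rightarrow> rat poly" where
  "DQ P = P - P \<circ>\<^sub>p [:-1, 1:]"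

lemma poly_DQ: "poly (DQ P) x = poly P x - poly P (x - 1)"
  by (simp add: DQ_def poly_pcompose)

lemma GP_shift: "(1 - fps_X) * GP P = GP (DQ P) + fps_const (poly P (-1))"
proof (rule fps_ext)
  fix n
  have "fps_nth ((1 - fps_X) * GP P) n = fps_nth (GP P - fps_X * GP P) n"
    by (simp add: algebra_simps)
  also have "\<dots> = poly P (of_nat n) - (if n = 0 then 0 else poly P (of_nat (n - 1)))"
    by (simp add: fps_X_mult_nth GP_def)
  also have "\<dots> = fps_nth (GP (DQ P) + fps_const (poly P (-1))) n"
    by (cases n) (auto simp: GP_def poly_DQ)
  finally show "fps_nth ((1 - fps_X) * GP P) n = fps_nth (GP (DQ P) + fps_const (poly P (-1))) n" .
qed

lemma DQ_deg:
  assumes "P = 0 \<or> degree P < Suc N"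
  shows "DQ P = 0 \<or> degree (DQ P) < N"
proof (cases "degree P = 0")
  case True
  then obtain a where "P = [:a:]" by (metis degree_eq_zeroE)
  hence "DQ P = 0" by (simp add: DQ_def)
  thus ?thesis by simp
next
  case False
  hence dP: "degree P < Suc N" "degree P > 0" using assms by auto
  have dc: "degree (P \<circ>\<^sub>p [:-1, 1:]) = degree P" by (simp add: degree_pcompose)
  have lc: "lead_coeff (P \<circ>\<^sub>p [:-1, 1:]) = lead_coeff P" by (simp add: lead_coeff_comp)
  have le: "degree (DQ P) \<le> degree P" unfolding DQ_def
    using degree_diff_le[of P "degree P" "P \<circ>\<^sub>p [:-1, 1:]"] dc by simp
  have c0: "coeff (DQ P) (degree P) = 0" unfolding DQ_def using lc dc by simp
  show ?thesis
  proof (cases "DQ P = 0")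
    case False
    have "degree (DQ P) \<noteq> degree P" using c0 False leading_coeff_0_iff by metis
    thus ?thesis using le dP by auto
  qed simp
qed

lemma oneX_vanish:
  assumes "\<forall>n\<ge>b. fps_nth F n = 0"
  shows "\<forall>n\<ge>Suc b. fps_nth ((1 - fps_X) * F) n = (0::rat)"
proof (intro allI impI)
  fix n assume n: "n \<ge> Suc b"
  have "fps_nth ((1 - fps_X) * F) n = fps_nth (F - fps_X * F) n" by (simp add: algebra_simps)
  also have "\<dots> = 0" using n assms by (simp add: fps_X_mult_nth)
  finally show "fps_nth ((1 - fps_X) * F) n = 0" .
qed

lemma oneX_const: "\<forall>n\<ge>Suc k. fps_nth ((1 - fps_X) ^ k * fps_const c) n = (0::rat)"
proof (induction k)
  case 0 thus ?case by simp
next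
  case (Suc k)
  from oneX_vanish[OF Suc] show ?case by (simp add: mult.assoc)
qed

lemma key:
  "\<forall>(P::rat poly) t. (P = 0 \<or> degree P < N) \<longrightarrow> (\<forall>n. 1 \<le> n \<and> n \<le> t \<longrightarrow> poly P (- of_nat n) = 0)
     \<longrightarrow> (\<forall>n \<ge> N - t. fps_nth ((1 - fps_X) ^ N * GP P) n = 0)"
proof (induction N)
  case 0
  show ?case by (auto simp: GP_def)
next
  case (Suc N)
  show ?case
  proof (intro allI impI)
    fix P :: "rat poly" and t n
    assume dP: "P = 0 \<or> degree P < Suc N"
      and roots: "\<forall>n. 1 \<le> n \<and> n \<le> t \<longrightarrow> poly P (- of_nat n) = 0"
      and n: "n \<ge> Suc N - t"
    have dQ: "DQ P = 0 \<or> degree (DQ P) < N" by (rule DQ_deg[OF dP])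
    have E: "(1 - fps_X) ^ Suc N * GP P = (1 - fps_X) ^ N * GP (DQ P) + (1 - fps_X) ^ N * fps_const (poly P (-1))"
    proof -
      have "(1 - fps_X) ^ Suc N * GP P = (1 - fps_X) ^ N * ((1 - fps_X) * GP P)"
        by (simp add: mult.assoc)
      also have "\<dots> = (1 - fps_X) ^ N * (GP (DQ P) + fps_const (poly P (-1)))" by (simp only: GP_shift)
      finally show ?thesis by (simp add: distrib_left)
    qed
    show "fps_nth ((1 - fps_X) ^ Suc N * GP P) n = 0"
    proof (cases "t = 0")
      case True
      have "fps_nth ((1 - fps_X) ^ N * GP (DQ P)) n = 0"
        using Suc.IH[rule_format, of "DQ P" 0 n] dQ n True by auto
      moreover have "fps_nth ((1 - fps_X) ^ N * fps_const (poly P (-1))) n = 0"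
        using oneX_const[of N "poly P (-1)"] n True by auto
      ultimately show ?thesis unfolding E by simp
    next
      case False
      have c: "poly P (-1) = 0" using roots[rule_format, of 1] False by simp
      have rQ: "\<forall>m. 1 \<le> m \<and> m \<le> t - 1 \<longrightarrow> poly (DQ P) (- of_nat m) = 0"
      proof (intro allI impI)
        fix m assume m: "1 \<le> m \<and> m \<le> t - 1"
        have "poly P (- of_nat m) = 0" using roots m by auto
        moreover have "Suc m \<le> t" using m by arith
        hence "poly P (- of_nat (Suc m)) = 0" using roots[rule_format, of "Suc m"] by (simp del: of_nat_Suc)
        moreover have "- of_nat m - 1 = (- of_nat (Suc m) :: rat)" by simp
        ultimately show "poly (DQ P) (- of_nat m) = 0" by (simp only: poly_DQ)
      qed
      have "fps_nth ((1 - fps_X) ^ N * GP (DQ P)) n = 0"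
        using Suc.IH[rule_format, of "DQ P" "t - 1" n] dQ rQ n False by auto
      thus ?thesis unfolding E c by simp
    qed
  qed
qed


definition HP :: "nat \<Rightarrow> nat \<Rightarrow> rat poly" where
  "HP r s = smult (1 / (\<Prod>j\<in>{1..s}. pochhammer (of_nat j) r)) (\<Prod>j\<in>{1..s}. \<Prod>i<r. [:of_nat (j+i), 1:])"

lemma poly_HP_prod: "poly (\<Prod>j\<in>{1..s}. \<Prod>i<r. [:of_nat (j+i), 1:]) x = (\<Prod>j\<in>{1..s}. pochhammer (x + of_nat j) r :: rat)"
  by (simp add: poly_prod pochhammer_prod atLeast0LessThan algebra_simps)

lemma hog_HP: "hoggatt r (int k + int s) (int s) = poly (HP r s) (of_nat k)"
proof -
  have "hoggatt r (int k + int s) (int s) = hoggatt r (int (k + s)) (int s)" by simp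
  also have "\<dots> = (\<Prod>j\<in>{1..s}. pochhammer (of_nat k + of_nat j) r) / (\<Prod>j\<in>{1..s}. pochhammer (of_nat j) r)"
    by (subst hoggatt_nat) auto
  also have "\<dots> = poly (HP r s) (of_nat k)"
    unfolding HP_def poly_smult poly_HP_prod by simp
  finally show ?thesis .
qed

lemma HP_deg: "HP r s = 0 \<or> degree (HP r s) < r * s + 1"
proof -
  have "degree (\<Prod>j\<in>{1..s}. \<Prod>i<r. [:(of_nat (j+i)::rat), 1:]) \<le> (\<Sum>j\<in>{1..s}. degree (\<Prod>i<r. [:(of_nat (j+i)::rat), 1:]))"
    using degree_prod_sum_le[of "{1..s}" "\<lambda>j. \<Prod>i<r. [:(of_nat (j+i)::rat), 1:]"] by (simp add: o_def)
  also have "\<dots> \<le> (\<Sum>j\<in>{1..s}. r)"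
  proof (rule sum_mono)
    fix j
    have "degree (\<Prod>i<r. [:(of_nat (j+i)::rat), 1:]) \<le> (\<Sum>i<r. degree [:(of_nat (j+i)::rat), 1:])"
      using degree_prod_sum_le[of "{..<r}" "\<lambda>i. [:(of_nat (j+i)::rat), 1:]"] by (simp add: o_def)
    also have "\<dots> = r" by simp
    finally show "degree (\<Prod>i<r. [:(of_nat (j+i)::rat), 1:]) \<le> r" .
  qed
  also have "\<dots> = r * s" by simp
  finally have dp: "degree (\<Prod>j\<in>{1..s}. \<Prod>i<r. [:(of_nat (j+i)::rat), 1:]) \<le> r * s" .
  have "degree (HP r s) \<le> degree (\<Prod>j\<in>{1..s}. \<Prod>i<r. [:(of_nat (j+i)::rat), 1:])"
    unfolding HP_def by (rule degree_smult_le)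
  thus ?thesis using dp by simp
qed

lemma HP_roots:
  assumes "1 \<le> r" "1 \<le> s" "1 \<le> n" "n \<le> r + s - 1"
  shows "poly (HP r s) (- of_nat n) = 0"
proof -
  define j0 where "j0 = min n s"
  have j0: "j0 \<in> {1..s}" using assms by (auto simp: j0_def)
  have "n - j0 < r" using assms by (auto simp: j0_def)
  hence "pochhammer (- of_nat (n - j0)) r = (0::rat)" by (simp add: pochhammer_of_nat_eq_0_iff)
  moreover have "j0 \<le> n" by (simp add: j0_def)
  hence "(- of_nat n + of_nat j0 :: rat) = - of_nat (n - j0)"
    by (simp add: of_nat_diff)
  ultimately have P0: "pochhammer (- of_nat n + of_nat j0) r = (0::rat)" by (simp only:)
  have Z: "(\<Prod>j\<in>{1..s}. pochhammer (- of_nat n + of_nat j) r :: rat) = 0"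
    by (rule prod_zero[OF _ bexI[where P="\<lambda>j. pochhammer (- of_nat n + of_nat j) r = (0::rat)", OF P0 j0]]) simp
  show ?thesis unfolding HP_def poly_smult poly_HP_prod Z by (rule mult_zero_right)
qed

theorem theorem2:
  fixes r m :: nat
  assumes "r \<ge> 1" and "m \<ge> r"
  shows "(1 - fps_X) ^ (r * (m - r + 1) + 1) * Abs_fps (\<lambda>k. dk k m r)
           = fps_const ((-1) ^ (r choose 2)) * fps_X ^ (m - r + 1)
             * Abs_fps (\<lambda>j. narayana r (m - r + 1) j)
         \<and> (\<forall>j > (r - 1) * (m - r). narayana r (m - r + 1) j = 0)"
proof -
  define s where "s = m - r + 1"
  have s1: "s \<ge> 1" using assms by (simp add: s_def)
  define H where "H = Abs_fps (\<lambda>k. hoggatt r (int k + int s) (int s))"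
  have NS: "Abs_fps (\<lambda>j. narayana r s j) = (1 - fps_X) ^ (r * s + 1) * H"
    by (simp add: narayana_def narayana_series_def H_def fps_nth_inverse)
  have DK: "Abs_fps (\<lambda>k. dk k m r) = fps_const ((-1) ^ (r choose 2)) * fps_X ^ s * H"
  proof (rule fps_ext)
    fix k
    show "fps_nth (Abs_fps (\<lambda>k. dk k m r)) k = fps_nth (fps_const ((-1) ^ (r choose 2)) * fps_X ^ s * H) k"
    proof -
      have R: "fps_nth (fps_const ((-1) ^ (r choose 2)) * fps_X ^ s * H) k
            = (-1) ^ (r choose 2) * (if k < s then 0 else hoggatt r (int (k - s) + int s) (int s))"
        by (simp only: mult.assoc fps_mult_left_const_nth fps_X_power_mult_nth H_def fps_nth_Abs_fps)
      show ?thesis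
      proof (cases "s \<le> k")
        case True
        have e: "int (k - s) + int s = int k" using True by simp
        have "dk k m r = (-1)^(r choose 2) * hoggatt r (int k) (int s)"
          using dk_closed[OF assms s_def, of k] hog_closed[OF True, of r] by (simp only: True if_True)
        thus ?thesis unfolding R e using True by simp
      next
        case False
        have "dk k m r = 0" using dk_closed[OF assms s_def, of k] by (simp only: False if_False)
        thus ?thesis unfolding R using False by simp
      qed
    qed
  qed
  have part1: "(1 - fps_X) ^ (r * s + 1) * Abs_fps (\<lambda>k. dk k m r)
           = fps_const ((-1) ^ (r choose 2)) * fps_X ^ s * Abs_fps (\<lambda>j. narayana r s j)"
    unfolding DK NS by (simp add: ac_simps)
  have part2: "\<forall>j > (r - 1) * (s - 1). narayana r s j = 0"
  proof (intro allI impI)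
    fix j assume j: "j > (r - 1) * (s - 1)"
    have roots: "\<forall>n. 1 \<le> n \<and> n \<le> r + s - 1 \<longrightarrow> poly (HP r s) (- of_nat n) = 0"
      using HP_roots[OF assms(1) s1] by blast
    have GH: "H = GP (HP r s)" unfolding H_def GP_def hog_HP by (rule refl)
    have K: "\<forall>n \<ge> (r * s + 1) - (r + s - 1). fps_nth ((1 - fps_X) ^ (r * s + 1) * GP (HP r s)) n = 0"
      by (rule key[of "r*s+1", THEN spec[of _ "HP r s"], THEN spec[of _ "r+s-1"], THEN mp, THEN mp, OF HP_deg roots])
    obtain r' s' where rs: "r = Suc r'" "s = Suc s'" using assms(1) s1 by (metis Suc_le_D One_nat_def)
    have "(r * s + 1) - (r + s - 1) = (r - 1) * (s - 1) + 1" unfolding rs by (simp add: algebra_simps)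
    hence "j \<ge> (r * s + 1) - (r + s - 1)" using j by simp
    hence "fps_nth ((1 - fps_X) ^ (r * s + 1) * H) j = 0" using K GH by simp
    moreover have "narayana r s j = fps_nth (Abs_fps (\<lambda>j. narayana r s j)) j" by simp
    ultimately show "narayana r s j = 0" unfolding NS by simp
  qed
  have e1: "m - r + 1 = s" by (simp add: s_def)
  have e2: "(r - 1) * (m - r) = (r - 1) * (s - 1)" by (simp add: s_def)
  show ?thesis unfolding e1 e2 by (rule conjI[OF part1 part2])
qed

end
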